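(* Fix finite $\mathcal{S}$, $\mathcal{A}$, $d_0\in\Delta(\mathcal{S})$, $\gamma\in[0,1)$, a reward $\mathcal{R}:\mathcal{S}\times\mathcal{A}\to[0,1]$, and transition models $\mathcal{T},\mathcal{T}'$ with $\delta=\frac12\max_{s,a}\|\mathcal{T}(\cdot\mid s,a)-\mathcal{T}'(\cdot\mid s,a)\|_1>0$. For any $\varepsilon>0$, if $1/(1-\gamma)<\sqrt{\varepsilon/\delta}$, then $(\mathcal{T},\mathcal{T}')$ is $\varepsilon$-unexploitable relative to every policy set and the task $(\mathcal{S},\mathcal{A},\_,d_0,\mathcal{R},\gamma)$.
   Context: For a transition model $\mathcal{T}$ and policy $\pi$ (stationary, or non-stationary $\pi=(\pi_0,\pi_1,\dots)$), $J_{\mathcal{T}}(\pi)=\mathbb{E}\big[\sum_{t\ge0}\gamma^t\mathcal{R}(s_t,a_t)\big]$ with $s_0\sim d_0$, $a_t\sim\pi_t(\cdot\mid s_t)$, $s_{t+1}\sim\mathcal{T}(\cdot\mid s_t,a_t)$. A task is an MDP without transition model; a policy set is any set of such policies. $(\mathcal{T},\mathcal{T}')$ is $\varepsilon$-exploitable relative to $\Pi$ if there exist $\pi,\pi'\in\Pi$ with $J_{\mathcal{T}}(\pi)-J_{\mathcal{T}}(\pi')>\varepsilon$ and $J_{\mathcal{T}'}(\pi')-J_{\mathcal{T}'}(\pi)>\varepsilon$; otherwise $\varepsilon$-unexploitable. *)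

theory Defs
  imports "HOL-Analysis.Analysis"
begin

text \<open>A transition model T s a s' = T(s' | s, a).
  A (possibly non-stationary) policy p t s a = p_t(a | s); stationary policies are
  the special case where p does not depend on t.\<close>

definition is_dist :: "('x::finite \<Rightarrow> real) \<Rightarrow> bool" where
  "is_dist p \<longleftrightarrow> (\<forall>x. 0 \<le> p x) \<and> (\<Sum>x\<in>UNIV. p x) = 1"

definition is_transition :: "('s::finite \<Rightarrow> 'a::finite \<Rightarrow> 's \<Rightarrow> real) \<Rightarrow> bool" where
  "is_transition T \<longleftrightarrow> (\<forall>s a. is_dist (T s a))"

definition is_policy :: "(nat \<Rightarrow> 's::finite \<Rightarrow> 'a::finite \<Rightarrow> real) \<Rightarrow> bool" where
  "is_policy p \<longleftrightarrow> (\<forall>t s. is_dist (p t s))"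

fun state_dist :: "('s::finite \<Rightarrow> real) \<Rightarrow> ('s \<Rightarrow> 'a::finite \<Rightarrow> 's \<Rightarrow> real)
    \<Rightarrow> (nat \<Rightarrow> 's \<Rightarrow> 'a \<Rightarrow> real) \<Rightarrow> nat \<Rightarrow> 's \<Rightarrow> real" where
  "state_dist d0 T p 0 = d0"
| "state_dist d0 T p (Suc t) =
     (\<lambda>s'. \<Sum>s\<in>UNIV. \<Sum>a\<in>UNIV. state_dist d0 T p t s * p t s a * T s a s')"

text \<open>J_T(p) = E[sum_t gamma^t R(s_t,a_t)], written via the time marginals.\<close>
definition J :: "('s::finite \<Rightarrow> real) \<Rightarrow> ('s \<Rightarrow> 'a::finite \<Rightarrow> real) \<Rightarrow> real
    \<Rightarrow> ('s \<Rightarrow> 'a \<Rightarrow> 's \<Rightarrow> real) \<Rightarrow> (nat \<Rightarrow> 's \<Rightarrow> 'a \<Rightarrow> real) \<Rightarrow> real" where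
  "J d0 R \<gamma> T p =
     (\<Sum>t. \<gamma> ^ t * (\<Sum>s\<in>UNIV. \<Sum>a\<in>UNIV. state_dist d0 T p t s * p t s a * R s a))"

definition exploitable :: "('s::finite \<Rightarrow> real) \<Rightarrow> ('s \<Rightarrow> 'a::finite \<Rightarrow> real) \<Rightarrow> real
    \<Rightarrow> real \<Rightarrow> (nat \<Rightarrow> 's \<Rightarrow> 'a \<Rightarrow> real) set
    \<Rightarrow> ('s \<Rightarrow> 'a \<Rightarrow> 's \<Rightarrow> real) \<Rightarrow> ('s \<Rightarrow> 'a \<Rightarrow> 's \<Rightarrow> real) \<Rightarrow> bool" where
  "exploitable d0 R \<gamma> \<epsilon> PS T T' \<longleftrightarrow>
     (\<exists>p\<in>PS. \<exists>p'\<in>PS. J d0 R \<gamma> T p - J d0 R \<gamma> T p' > \<epsilon>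
                        \<and> J d0 R \<gamma> T' p' - J d0 R \<gamma> T' p > \<epsilon>)"

definition unexploitable where
  "unexploitable d0 R \<gamma> \<epsilon> PS T T' \<longleftrightarrow> \<not> exploitable d0 R \<gamma> \<epsilon> PS T T'"

definition tv_gap :: "('s::finite \<Rightarrow> 'a::finite \<Rightarrow> 's \<Rightarrow> real) \<Rightarrow> ('s \<Rightarrow> 'a \<Rightarrow> 's \<Rightarrow> real) \<Rightarrow> real" where
  "tv_gap T T' = (1/2) * Max {(\<Sum>s'\<in>UNIV. \<bar>T s a s' - T' s a s'\<bar>) | s a. True}"

end

theory Submission
  imports Defs
begin

lemma swap3:
  fixes f :: "'x::finite \<Rightarrow> 'y::finite \<Rightarrow> 'z::finite \<Rightarrow> real"
  shows "(\<Sum>z\<in>UNIV. \<Sum>x\<in>UNIV. \<Sum>y\<in>UNIV. f x y z) = (\<Sum>x\<in>UNIV. \<Sum>y\<in>UNIV. \<Sum>z\<in>UNIV. f x y z)"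
  apply (rule trans[OF sum.swap])
  apply (rule sum.cong[OF refl])
  apply (rule sum.swap)
  done

lemma sd_nonneg:
  assumes "is_dist d0" "is_transition T" "is_policy p"
  shows "0 \<le> state_dist d0 T p t s"
proof (induction t arbitrary: s)
  case 0 then show ?case using assms(1) by (simp add: is_dist_def)
next
  case (Suc t)
  have Tn: "\<And>s a s'. 0 \<le> T s a s'" and pn: "\<And>s a. 0 \<le> p t s a"
    using assms(2,3) unfolding is_transition_def is_policy_def is_dist_def by blast+
  show ?case unfolding state_dist.simps
    by (intro sum_nonneg mult_nonneg_nonneg Suc.IH pn Tn)
qed

lemma sd_sum:
  assumes "is_dist d0" "is_transition T" "is_policy p"
  shows "(\<Sum>s\<in>UNIV. state_dist d0 T p t s) = 1"
  using assms
proof (induction t)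
  case 0 then show ?case by (simp add: is_dist_def)
next
  case (Suc t)
  have T1: "\<And>s a. (\<Sum>s'\<in>UNIV. T s a s') = 1" and p1: "\<And>s. (\<Sum>a\<in>UNIV. p t s a) = 1"
    using Suc.prems by (auto simp: is_transition_def is_policy_def is_dist_def)
  have "(\<Sum>s'\<in>UNIV. state_dist d0 T p (Suc t) s')
      = (\<Sum>s\<in>UNIV. \<Sum>a\<in>UNIV. \<Sum>s'\<in>UNIV. state_dist d0 T p t s * p t s a * T s a s')"
    unfolding state_dist.simps by (rule swap3)
  also have "\<dots> = (\<Sum>s\<in>UNIV. \<Sum>a\<in>UNIV. state_dist d0 T p t s * p t s a)"
    by (simp add: sum_distrib_left[symmetric] T1)
  also have "\<dots> = (\<Sum>s\<in>UNIV. state_dist d0 T p t s)"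
    by (simp add: sum_distrib_left[symmetric] p1)
  finally show ?case using Suc by simp
qed

lemma tv_gap_ge:
  fixes T T' :: "'s::finite \<Rightarrow> 'a::finite \<Rightarrow> 's \<Rightarrow> real"
  shows "(\<Sum>s'\<in>UNIV. \<bar>T s a s' - T' s a s'\<bar>) \<le> 2 * tv_gap T T'"
proof -
  have fin: "finite {(\<Sum>s'\<in>UNIV. \<bar>T s a s' - T' s a s'\<bar>) | s a. True}"
  proof -
    have "{(\<Sum>s'\<in>UNIV. \<bar>T s a s' - T' s a s'\<bar>) | s a. True}
        = (\<lambda>(s,a). (\<Sum>s'\<in>UNIV. \<bar>T s a s' - T' s a s'\<bar>)) ` UNIV" by auto
    then show ?thesis by simp
  qed
  have "(\<Sum>s'\<in>UNIV. \<bar>T s a s' - T' s a s'\<bar>) \<le> Max {(\<Sum>s'\<in>UNIV. \<bar>T s a s' - T' s a s'\<bar>) | s a. True}"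
    by (rule Max_ge[OF fin]) blast
  then show ?thesis by (simp add: tv_gap_def)
qed

lemma sd_diff:
  fixes d0 :: "'s::finite \<Rightarrow> real" and T T' :: "'s \<Rightarrow> 'a::finite \<Rightarrow> 's \<Rightarrow> real"
    and p :: "nat \<Rightarrow> 's \<Rightarrow> 'a \<Rightarrow> real"
  assumes "is_dist d0" "is_transition T" "is_transition T'" "is_policy p"
  shows "(\<Sum>s\<in>UNIV. \<bar>state_dist d0 T p t s - state_dist d0 T' p t s\<bar>) \<le> 2 * real t * tv_gap T T'"
proof (induction t)
  case 0 then show ?case by simp
next
  case (Suc t)
  define m where "m = state_dist d0 T p t"
  define m' where "m' = state_dist d0 T' p t"
  define \<delta> where "\<delta> = tv_gap T T'"
  have Tn: "\<And>s a s'. 0 \<le> T s a s'" and T1: "\<And>s a. (\<Sum>s'\<in>UNIV. T s a s') = 1"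
    and pn: "\<And>s a. 0 \<le> p t s a" and p1: "\<And>s. (\<Sum>a\<in>UNIV. p t s a) = 1"
    using assms by (auto simp: is_transition_def is_policy_def is_dist_def)
  have m'n: "\<And>s. 0 \<le> m' s" unfolding m'_def by (rule sd_nonneg[OF assms(1,3,4)])
  have m'1: "(\<Sum>s\<in>UNIV. m' s) = 1" unfolding m'_def by (rule sd_sum[OF assms(1,3,4)])
  have IH: "(\<Sum>s\<in>UNIV. \<bar>m s - m' s\<bar>) \<le> 2 * real t * \<delta>" using Suc unfolding m_def m'_def \<delta>_def .
  define A where "A s' = (\<Sum>s\<in>UNIV. \<Sum>a\<in>UNIV. \<bar>m s - m' s\<bar> * p t s a * T s a s')" for s'
  define B where "B s' = (\<Sum>s\<in>UNIV. \<Sum>a\<in>UNIV. m' s * p t s a * \<bar>T s a s' - T' s a s'\<bar>)" for s'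
  have pt: "\<bar>state_dist d0 T p (Suc t) s' - state_dist d0 T' p (Suc t) s'\<bar> \<le> A s' + B s'" for s'
  proof -
    have eq: "state_dist d0 T p (Suc t) s' - state_dist d0 T' p (Suc t) s'
      = (\<Sum>s\<in>UNIV. \<Sum>a\<in>UNIV. (m s - m' s) * p t s a * T s a s')
        + (\<Sum>s\<in>UNIV. \<Sum>a\<in>UNIV. m' s * p t s a * (T s a s' - T' s a s'))"
    proof -
      have "(\<Sum>s\<in>UNIV. \<Sum>a\<in>UNIV. (m s - m' s) * p t s a * T s a s')
        + (\<Sum>s\<in>UNIV. \<Sum>a\<in>UNIV. m' s * p t s a * (T s a s' - T' s a s'))
        = (\<Sum>s\<in>UNIV. \<Sum>a\<in>UNIV. (m s - m' s) * p t s a * T s a s' + m' s * p t s a * (T s a s' - T' s a s'))"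
        by (simp only: sum.distrib)
      also have "\<dots> = (\<Sum>s\<in>UNIV. \<Sum>a\<in>UNIV. m s * p t s a * T s a s' - m' s * p t s a * T' s a s')"
        by (rule sum.cong[OF refl], rule sum.cong[OF refl]) (simp add: algebra_simps)
      also have "\<dots> = state_dist d0 T p (Suc t) s' - state_dist d0 T' p (Suc t) s'"
        by (simp add: m_def m'_def sum_subtractf)
      finally show ?thesis by simp
    qed
    have a1: "\<bar>\<Sum>s\<in>UNIV. \<Sum>a\<in>UNIV. (m s - m' s) * p t s a * T s a s'\<bar> \<le> A s'"
      unfolding A_def
      apply (rule order_trans[OF sum_abs], rule sum_mono)
      apply (rule order_trans[OF sum_abs], rule sum_mono)
      using pn Tn by (simp add: abs_mult)
    have a2: "\<bar>\<Sum>s\<in>UNIV. \<Sum>a\<in>UNIV. m' s * p t s a * (T s a s' - T' s a s')\<bar> \<le> B s'"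
      unfolding B_def
      apply (rule order_trans[OF sum_abs], rule sum_mono)
      apply (rule order_trans[OF sum_abs], rule sum_mono)
      using pn m'n by (simp add: abs_mult)
    show ?thesis unfolding eq by (rule order_trans[OF abs_triangle_ineq add_mono[OF a1 a2]])
  qed
  have SA: "(\<Sum>s'\<in>UNIV. A s') = (\<Sum>s\<in>UNIV. \<bar>m s - m' s\<bar>)"
  proof -
    have "(\<Sum>s'\<in>UNIV. A s') = (\<Sum>s\<in>UNIV. \<Sum>a\<in>UNIV. \<Sum>s'\<in>UNIV. \<bar>m s - m' s\<bar> * p t s a * T s a s')"
      unfolding A_def by (rule swap3)
    also have "\<dots> = (\<Sum>s\<in>UNIV. \<Sum>a\<in>UNIV. \<bar>m s - m' s\<bar> * p t s a)"
      by (simp add: sum_distrib_left[symmetric] T1)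
    also have "\<dots> = (\<Sum>s\<in>UNIV. \<bar>m s - m' s\<bar>)"
      by (simp add: sum_distrib_left[symmetric] p1)
    finally show ?thesis .
  qed
  have SB: "(\<Sum>s'\<in>UNIV. B s') \<le> 2 * \<delta>"
  proof -
    have "(\<Sum>s'\<in>UNIV. B s') = (\<Sum>s\<in>UNIV. \<Sum>a\<in>UNIV. \<Sum>s'\<in>UNIV. m' s * p t s a * \<bar>T s a s' - T' s a s'\<bar>)"
      unfolding B_def by (rule swap3)
    also have "\<dots> = (\<Sum>s\<in>UNIV. \<Sum>a\<in>UNIV. m' s * p t s a * (\<Sum>s'\<in>UNIV. \<bar>T s a s' - T' s a s'\<bar>))"
      by (simp add: sum_distrib_left)
    also have "\<dots> \<le> (\<Sum>s\<in>UNIV. \<Sum>a\<in>UNIV. m' s * p t s a * (2 * \<delta>))"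
      apply (rule sum_mono, rule sum_mono)
      using m'n pn tv_gap_ge[where T=T and T'=T'] unfolding \<delta>_def
      by (simp add: mult_left_mono)
    also have "\<dots> = (\<Sum>s\<in>UNIV. m' s * (2 * \<delta>))"
    proof (rule sum.cong[OF refl])
      fix s
      show "(\<Sum>a\<in>UNIV. m' s * p t s a * (2 * \<delta>)) = m' s * (2 * \<delta>)"
        using p1[of s] by (simp add: sum_distrib_left[symmetric] sum_distrib_right[symmetric])
    qed
    also have "\<dots> = 2 * \<delta>" using m'1 by (simp add: sum_distrib_right[symmetric])
    finally show ?thesis .
  qed
  have "(\<Sum>s'\<in>UNIV. \<bar>state_dist d0 T p (Suc t) s' - state_dist d0 T' p (Suc t) s'\<bar>)
      \<le> (\<Sum>s'\<in>UNIV. A s' + B s')" by (rule sum_mono) (rule pt)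
  also have "\<dots> = (\<Sum>s'\<in>UNIV. A s') + (\<Sum>s'\<in>UNIV. B s')" by (simp add: sum.distrib)
  also have "\<dots> \<le> 2 * real t * \<delta> + 2 * \<delta>" using SA SB IH by linarith
  also have "2 * real t * \<delta> + 2 * \<delta> = 2 * real (Suc t) * \<delta>"
    by (simp add: ring_distribs)
  finally show ?case unfolding \<delta>_def .
qed

definition rw where
  "rw d0 R T p t = (\<Sum>s\<in>UNIV. \<Sum>a\<in>UNIV. state_dist d0 T p t s * p t s a * R s a)"

lemma rw_bounds:
  assumes "is_dist d0" "is_transition T" "is_policy p" "\<forall>s a. 0 \<le> R s a \<and> R s a \<le> 1"
  shows "0 \<le> rw d0 R T p t \<and> rw d0 R T p t \<le> 1"
proof -
  have mn: "\<And>s. 0 \<le> state_dist d0 T p t s" by (rule sd_nonneg[OF assms(1,2,3)])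
  have m1: "(\<Sum>s\<in>UNIV. state_dist d0 T p t s) = 1" by (rule sd_sum[OF assms(1,2,3)])
  have pn: "\<And>s a. 0 \<le> p t s a" and p1: "\<And>s. (\<Sum>a\<in>UNIV. p t s a) = 1"
    using assms by (auto simp: is_policy_def is_dist_def)
  have "rw d0 R T p t \<le> (\<Sum>s\<in>UNIV. \<Sum>a\<in>UNIV. state_dist d0 T p t s * p t s a)"
    unfolding rw_def apply (rule sum_mono, rule sum_mono)
    using mn pn assms(4) by (simp add: mult_left_le)
  also have "\<dots> = 1" using m1 p1 by (simp add: sum_distrib_left[symmetric])
  finally show ?thesis unfolding rw_def using mn pn assms(4)
    by (auto intro!: sum_nonneg)
qed

lemma rw_diff:
  assumes "is_dist d0" "is_transition T" "is_transition T'" "is_policy p"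
    "\<forall>s a. 0 \<le> R s a \<and> R s a \<le> 1"
  shows "\<bar>rw d0 R T p t - rw d0 R T' p t\<bar> \<le> real t * tv_gap T T'"
proof -
  define m where "m = state_dist d0 T p t"
  define m' where "m' = state_dist d0 T' p t"
  define g where "g s = (\<Sum>a\<in>UNIV. p t s a * R s a)" for s
  have pn: "\<And>s a. 0 \<le> p t s a" and p1: "\<And>s. (\<Sum>a\<in>UNIV. p t s a) = 1"
    using assms by (auto simp: is_policy_def is_dist_def)
  have g0: "0 \<le> g s" for s unfolding g_def using pn assms(5) by (auto intro!: sum_nonneg)
  have g1: "g s \<le> 1" for s
  proof -
    have "g s \<le> (\<Sum>a\<in>UNIV. p t s a)" unfolding g_def apply (rule sum_mono)
      using pn assms(5) by (simp add: mult_left_le)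
    then show ?thesis using p1 by simp
  qed
  have m1: "(\<Sum>s\<in>UNIV. m s) = 1" unfolding m_def by (rule sd_sum[OF assms(1,2,4)])
  have m'1: "(\<Sum>s\<in>UNIV. m' s) = 1" unfolding m'_def by (rule sd_sum[OF assms(1,3,4)])
  have "rw d0 R T p t - rw d0 R T' p t = (\<Sum>s\<in>UNIV. (m s - m' s) * g s)"
    unfolding rw_def m_def m'_def g_def
    by (simp add: sum_subtractf[symmetric] sum_distrib_left algebra_simps)
  also have "\<dots> = (\<Sum>s\<in>UNIV. (m s - m' s) * (g s - 1/2))"
  proof -
    have "(\<Sum>s\<in>UNIV. (m s - m' s) * (g s - 1/2)) = (\<Sum>s\<in>UNIV. (m s - m' s) * g s) - (1/2) * ((\<Sum>s\<in>UNIV. m s) - (\<Sum>s\<in>UNIV. m' s))"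
      by (simp add: sum_subtractf[symmetric] sum_distrib_left algebra_simps)
    then show ?thesis using m1 m'1 by simp
  qed
  finally have eq: "rw d0 R T p t - rw d0 R T' p t = (\<Sum>s\<in>UNIV. (m s - m' s) * (g s - 1/2))" .
  have "\<bar>\<Sum>s\<in>UNIV. (m s - m' s) * (g s - 1/2)\<bar> \<le> (\<Sum>s\<in>UNIV. \<bar>m s - m' s\<bar> * (1/2))"
    apply (rule order_trans[OF sum_abs], rule sum_mono)
    subgoal for s
    proof -
      have h: "\<bar>g s - 1/2\<bar> \<le> 1/2" using g0[of s] g1[of s] abs_le_iff[of "g s - 1/2" "1/2"] by linarith
      show "\<bar>(m s - m' s) * (g s - 1/2)\<bar> \<le> \<bar>m s - m' s\<bar> * (1/2)"
        unfolding abs_mult by (rule mult_left_mono[OF h]) simp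
    qed
    done
  also have "\<dots> = (1/2) * (\<Sum>s\<in>UNIV. \<bar>m s - m' s\<bar>)" by (simp add: sum_distrib_right)
  also have "\<dots> \<le> (1/2) * (2 * real t * tv_gap T T')"
    using sd_diff[OF assms(1-4), of t] unfolding m_def m'_def by simp
  finally show ?thesis unfolding eq by simp
qed

lemma J_diff:
  assumes "is_dist d0" "is_transition T" "is_transition T'" "is_policy p"
    "\<forall>s a. 0 \<le> R s a \<and> R s a \<le> 1" "0 \<le> \<gamma>" "\<gamma> < 1" "0 \<le> tv_gap T T'"
  shows "\<bar>J d0 R \<gamma> T p - J d0 R \<gamma> T' p\<bar> \<le> tv_gap T T' / (1 - \<gamma>)^2"
proof -
  define \<delta> where "\<delta> = tv_gap T T'"
  define f where "f t = \<gamma> ^ t * rw d0 R T p t" for t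
  define g where "g t = \<gamma> ^ t * rw d0 R T' p t" for t
  define h where "h t = \<delta> * (of_nat (Suc t) * \<gamma> ^ t)" for t
  have geo: "summable (\<lambda>t. \<gamma> ^ t)" using assms by (simp add: summable_geometric)
  have sf: "summable f" unfolding f_def
    apply (rule summable_comparison_test[OF _ geo])
    using rw_bounds[OF assms(1,2,4,5)] assms(6) by (auto simp: abs_mult intro!: mult_left_le)
  have sg: "summable g" unfolding g_def
    apply (rule summable_comparison_test[OF _ geo])
    using rw_bounds[OF assms(1,3,4,5)] assms(6) by (auto simp: abs_mult intro!: mult_left_le)
  have hs: "h sums (\<delta> * (1 / (1 - \<gamma>)^2))" unfolding h_def
    apply (rule sums_mult)
    using geometric_deriv_sums[of \<gamma>] assms(6,7) by simp
  have sh: "summable h" using hs sums_summable by blast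
  have suh: "suminf h = \<delta> / (1 - \<gamma>)^2" using hs sums_unique by fastforce
  have Jd: "J d0 R \<gamma> T p - J d0 R \<gamma> T' p = (\<Sum>t. f t - g t)"
    unfolding J_def f_def g_def rw_def[symmetric]
    using suminf_diff[OF sf sg] unfolding f_def g_def by simp
  have tb: "\<bar>f t - g t\<bar> \<le> h t" for t
  proof -
    have "\<bar>f t - g t\<bar> = \<gamma> ^ t * \<bar>rw d0 R T p t - rw d0 R T' p t\<bar>"
      unfolding f_def g_def using assms(6) by (simp add: abs_mult right_diff_distrib[symmetric])
    also have "\<dots> \<le> \<gamma> ^ t * (real t * \<delta>)"
      using rw_diff[OF assms(1-5), of t] assms(6) unfolding \<delta>_def by (simp add: mult_left_mono)
    also have "\<dots> \<le> h t" unfolding h_def using assms(6,8) unfolding \<delta>_def[symmetric]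
      by (simp add: algebra_simps)
    finally show ?thesis .
  qed
  have sfg: "summable (\<lambda>t. f t - g t)" using sf sg summable_diff by blast
  have "(\<Sum>t. f t - g t) \<le> suminf h"
    apply (rule suminf_le[OF _ sfg sh]) using tb abs_le_D1 by metis
  moreover have "- suminf h \<le> (\<Sum>t. f t - g t)"
  proof -
    have "(\<Sum>t. - h t) \<le> (\<Sum>t. f t - g t)"
      apply (rule suminf_le[OF _ summable_minus[OF sh] sfg])
      subgoal for t using tb[of t] abs_le_iff[of "f t - g t" "h t"] by linarith
      done
    then show ?thesis using suminf_minus[OF sh] by simp
  qed
  ultimately show ?thesis unfolding Jd suh \<delta>_def by (simp add: abs_le_iff)
qed

theorem mainTheorem15:
  fixes d0 :: "'s::finite \<Rightarrow> real" and R :: "'s \<Rightarrow> 'a::finite \<Rightarrow> real"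
    and \<gamma> \<epsilon> :: real and T T' :: "'s \<Rightarrow> 'a \<Rightarrow> 's \<Rightarrow> real"
  assumes "is_dist d0"
    and "0 \<le> \<gamma>" and "\<gamma> < 1"
    and "\<forall>s a. 0 \<le> R s a \<and> R s a \<le> 1"
    and "is_transition T" and "is_transition T'"
    and "tv_gap T T' > 0"
    and "\<epsilon> > 0"
    and "1 / (1 - \<gamma>) < sqrt (\<epsilon> / tv_gap T T')"
  shows "\<forall>PS. (\<forall>p\<in>PS. is_policy p) \<longrightarrow> unexploitable d0 R \<gamma> \<epsilon> PS T T'"
proof (intro allI impI)
  fix PS :: "(nat \<Rightarrow> 's \<Rightarrow> 'a \<Rightarrow> real) set" assume PS: "\<forall>p\<in>PS. is_policy p"
  define \<delta> where "\<delta> = tv_gap T T'"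
  have dpos: "\<delta> > 0" using assms(7) unfolding \<delta>_def .
  have "(1 / (1 - \<gamma>))^2 < (sqrt (\<epsilon> / \<delta>))^2"
    apply (rule power_strict_mono) using assms(9,3) unfolding \<delta>_def by auto
  then have "1 / (1 - \<gamma>)^2 < \<epsilon> / \<delta>" using dpos assms(8) by (simp add: power_divide)
  then have "\<delta> * (1 / (1 - \<gamma>)^2) < \<delta> * (\<epsilon> / \<delta>)"
    by (rule mult_strict_left_mono) (rule dpos)
  then have key: "\<delta> / (1 - \<gamma>)^2 < \<epsilon>" using dpos by simp
  show "unexploitable d0 R \<gamma> \<epsilon> PS T T'"
    unfolding unexploitable_def exploitable_def
  proof
    assume "\<exists>p\<in>PS. \<exists>p'\<in>PS. J d0 R \<gamma> T p - J d0 R \<gamma> T p' > \<epsilon> \<and> J d0 R \<gamma> T' p' - J d0 R \<gamma> T' p > \<epsilon>"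
    then obtain p p' where pp: "p \<in> PS" "p' \<in> PS" and
      c1: "J d0 R \<gamma> T p - J d0 R \<gamma> T p' > \<epsilon>" and c2: "J d0 R \<gamma> T' p' - J d0 R \<gamma> T' p > \<epsilon>" by blast
    have b1: "\<bar>J d0 R \<gamma> T p - J d0 R \<gamma> T' p\<bar> \<le> \<delta> / (1 - \<gamma>)^2"
      using J_diff[OF assms(1,5,6) _ assms(4,2,3)] PS pp dpos unfolding \<delta>_def by auto
    have b2: "\<bar>J d0 R \<gamma> T p' - J d0 R \<gamma> T' p'\<bar> \<le> \<delta> / (1 - \<gamma>)^2"
      using J_diff[OF assms(1,5,6) _ assms(4,2,3)] PS pp dpos unfolding \<delta>_def by auto
    show False using b1 b2 c1 c2 key by (simp add: abs_le_iff)
  qed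
qed

end
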